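(* Let $E$ be a real Banach space and let $T:E\to E$ be a linear operator preserving (Birkhoff–James) orthogonality, i.e. for all $x,y\in E$, $x\perp y$ implies $Tx\perp Ty$. Then there exist a constant $k\in\mathbb{R}$ and a linear isometry $U:E\to E$ (i.e. $\|Ux\|=\|x\|$ for all $x\in E$) such that $T=kU$. Equivalently, there is a constant $c\ge 0$ with $\|Tx\|=c\|x\|$ for all $x\in E$.
   Context: For $x,y$ in a real normed space $E$, $x$ is said to be orthogonal to $y$, written $x\perp y$, if $\|x+\alpha y\|\ge\|x\|$ for every $\alpha\in\mathbb{R}$. *)

theory Defs
  imports "HOL-Analysis.Analysis"
begin

definition bj_orth :: "'a::real_normed_vector \<Rightarrow> 'a \<Rightarrow> bool" where
  "bj_orth x y \<longleftrightarrow> (\<forall>\<alpha>::real. norm (x + \<alpha> *\<^sub>R y) \<ge> norm x)"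

end

theory Submission
  imports Defs
begin

lemma orth_scale:
  assumes "bj_orth u w"
  shows "norm (l *\<^sub>R u + g *\<^sub>R w) \<ge> \<bar>l\<bar> * norm u"
proof (cases "l = 0")
  case True thus ?thesis by simp
next
  case False
  have "l *\<^sub>R u + g *\<^sub>R w = l *\<^sub>R (u + (g / l) *\<^sub>R w)" using False by (simp add: algebra_simps)
  hence "norm (l *\<^sub>R u + g *\<^sub>R w) = \<bar>l\<bar> * norm (u + (g / l) *\<^sub>R w)" by simp
  moreover have "norm (u + (g / l) *\<^sub>R w) \<ge> norm u" using assms unfolding bj_orth_def by blast
  ultimately show ?thesis by (simp add: mult_left_mono)
qed

lemma local_orth:
  assumes loc: "\<And>\<alpha>. \<bar>\<alpha> * b\<bar> < 1 \<Longrightarrow> norm (u + \<alpha> *\<^sub>R w) \<ge> norm u"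
  shows "bj_orth u w"
  unfolding bj_orth_def
proof
  fix \<alpha> :: real
  define \<theta> where "\<theta> = 1 / (1 + \<bar>\<alpha> * b\<bar>)"
  have th: "\<theta> > 0" "\<theta> \<le> 1" unfolding \<theta>_def by auto
  have "\<bar>(\<theta> * \<alpha>) * b\<bar> = \<bar>\<alpha> * b\<bar> / (1 + \<bar>\<alpha> * b\<bar>)" unfolding \<theta>_def by (simp add: abs_mult)
  also have "\<dots> < 1" by simp
  finally have "norm (u + (\<theta> * \<alpha>) *\<^sub>R w) \<ge> norm u" by (rule loc)
  moreover have "u + (\<theta> * \<alpha>) *\<^sub>R w = \<theta> *\<^sub>R (u + \<alpha> *\<^sub>R w) + (1 - \<theta>) *\<^sub>R u"
    by (simp add: algebra_simps)
  moreover have "norm (\<theta> *\<^sub>R (u + \<alpha> *\<^sub>R w) + (1 - \<theta>) *\<^sub>R u) \<le> \<theta> * norm (u + \<alpha> *\<^sub>R w) + (1 - \<theta>) * norm u"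
  proof -
    have "norm (\<theta> *\<^sub>R (u + \<alpha> *\<^sub>R w) + (1 - \<theta>) *\<^sub>R u) \<le> norm (\<theta> *\<^sub>R (u + \<alpha> *\<^sub>R w)) + norm ((1 - \<theta>) *\<^sub>R u)"
      by (rule norm_triangle_ineq)
    thus ?thesis using th by simp
  qed
  ultimately have "\<theta> * norm u \<le> \<theta> * norm (u + \<alpha> *\<^sub>R w)" by (simp add: algebra_simps)
  thus "norm u \<le> norm (u + \<alpha> *\<^sub>R w)" using th by simp
qed

lemma tangent:
  fixes T :: "'a::real_normed_vector \<Rightarrow> 'a"
  assumes lin: "linear T"
    and pres: "\<And>x y. bj_orth x y \<Longrightarrow> bj_orth (T x) (T y)"
    and nz: "y + s *\<^sub>R x \<noteq> 0"
    and sup: "\<And>q. norm (y + q *\<^sub>R x) \<ge> norm (y + s *\<^sub>R x) + b * (q - s)"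
  shows "norm (T (y + q *\<^sub>R x)) * norm (y + s *\<^sub>R x) \<ge>
         norm (T (y + s *\<^sub>R x)) * (norm (y + s *\<^sub>R x) + b * (q - s))"
proof -
  define u where "u = y + s *\<^sub>R x"
  define p where "p = norm u"
  have p: "p > 0" using nz unfolding p_def u_def by simp
  define w where "w = b *\<^sub>R u - p *\<^sub>R x"
  have orth: "bj_orth u w"
  proof (rule local_orth[where b = b])
    fix \<alpha> :: real assume a: "\<bar>\<alpha> * b\<bar> < 1"
    define c where "c = 1 + \<alpha> * b"
    have c: "c > 0" using a unfolding c_def by linarith
    define q0 where "q0 = s - \<alpha> * p / c"
    have "u + \<alpha> *\<^sub>R w = c *\<^sub>R (y + q0 *\<^sub>R x)"
    proof -
      have "c * q0 = c * s - \<alpha> * p" unfolding q0_def using c by (simp add: field_simps)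
      hence "c *\<^sub>R (y + q0 *\<^sub>R x) = c *\<^sub>R y + (c * s - \<alpha> * p) *\<^sub>R x"
        by (simp add: scaleR_add_right)
      also have "\<dots> = u + \<alpha> *\<^sub>R w" unfolding u_def w_def c_def by (simp add: algebra_simps)
      finally show ?thesis by simp
    qed
    hence "norm (u + \<alpha> *\<^sub>R w) = c * norm (y + q0 *\<^sub>R x)" using c by simp
    also have "\<dots> \<ge> c * (p + b * (q0 - s))" using sup[of q0] c unfolding p_def u_def
      by (intro mult_left_mono) auto
    moreover have "c * (p + b * (q0 - s)) = p" unfolding q0_def c_def using c unfolding c_def
      by (simp add: field_simps)
    ultimately show "norm (u + \<alpha> *\<^sub>R w) \<ge> norm u" unfolding p_def by simp
  qed
  have orthT: "bj_orth (T u) (T w)" using pres orth by blast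
  define l where "l = (p + b * (q - s)) / p"
  define g where "g = - (q - s) / p"
  have "y + q *\<^sub>R x = l *\<^sub>R u + g *\<^sub>R w"
  proof -
    have e1: "l + g * b = 1" unfolding l_def g_def using p by (simp add: field_simps)
    have e2: "- g * p = q - s" unfolding g_def using p by simp
    have "l *\<^sub>R u + g *\<^sub>R w = (l + g * b) *\<^sub>R u + (- g * p) *\<^sub>R x"
      unfolding w_def by (simp add: algebra_simps)
    also have "\<dots> = y + q *\<^sub>R x" unfolding e1 e2 u_def by (simp add: algebra_simps)
    finally show ?thesis by simp
  qed
  hence "T (y + q *\<^sub>R x) = l *\<^sub>R T u + g *\<^sub>R T w"
    using lin by (simp add: linear_add linear_scale)
  hence "norm (T (y + q *\<^sub>R x)) \<ge> \<bar>l\<bar> * norm (T u)" using orth_scale[OF orthT] by simp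
  hence "norm (T (y + q *\<^sub>R x)) \<ge> l * norm (T u)"
    by (smt (verit) abs_ge_self mult_right_mono norm_ge_zero)
  hence "norm (T (y + q *\<^sub>R x)) * p \<ge> l * norm (T u) * p" using p by (simp add: mult_right_mono)
  moreover have "l * norm (T u) * p = norm (T u) * (p + b * (q - s))" unfolding l_def using p by simp
  ultimately show ?thesis unfolding p_def u_def by simp
qed

lemma subgrad_exists:
  fixes f :: "real \<Rightarrow> real"
  assumes cvx: "\<And>h k. h > 0 \<Longrightarrow> k > 0 \<Longrightarrow> (h + k) * f s \<le> h * f (s - k) + k * f (s + h)"
  shows "\<exists>B. \<forall>q. f q \<ge> f s + B * (q - s)"
proof -
  define S where "S = (\<lambda>h. (f (s + h) - f s) / h) ` {0<..}"
  have low: "(f s - f (s - k)) / k \<le> z" if "k > 0" "z \<in> S" for k z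
  proof -
    from that obtain h where h: "h > 0" "z = (f (s + h) - f s) / h" unfolding S_def by auto
    have "(h + k) * f s \<le> h * f (s - k) + k * f (s + h)" using cvx h(1) that(1) by auto
    hence "h * (f s - f (s - k)) \<le> k * (f (s + h) - f s)" by (simp add: algebra_simps)
    hence "(f s - f (s - k)) / k \<le> (f (s + h) - f s) / h" using h(1) that(1)
      by (simp add: divide_simps mult.commute)
    thus ?thesis using h by simp
  qed
  have ne: "S \<noteq> {}" unfolding S_def by auto
  have bdd: "bdd_below S" using low[of 1] by (metis bdd_below.I zero_less_one)
  define B where "B = Inf S"
  show ?thesis
  proof (intro exI allI)
    fix q
    consider "q > s" | "q = s" | "q < s" by linarith
    then show "f q \<ge> f s + B * (q - s)"
    proof cases
      case 1
      have "(f (s + (q - s)) - f s) / (q - s) \<in> S" unfolding S_def using 1 by (intro imageI) auto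
      hence "B \<le> (f q - f s) / (q - s)" unfolding B_def using cInf_lower[OF _ bdd] by auto
      thus ?thesis using 1 by (simp add: field_simps)
    next
      case 2 thus ?thesis by simp
    next
      case 3
      have "(f s - f (s - (s - q))) / (s - q) \<le> B" unfolding B_def
        by (rule cInf_greatest[OF ne]) (use low[of "s - q"] 3 in auto)
      thus ?thesis using 3 by (simp add: field_simps)
    qed
  qed
qed

lemma ratio_mono:
  fixes \<phi> \<psi> B :: "real \<Rightarrow> real"
  assumes pos: "\<And>q. \<phi> q > 0" and cont: "continuous_on {s..t} \<phi>" and nn: "\<And>q. \<psi> q \<ge> 0"
   and sup: "\<And>a q. \<phi> q \<ge> \<phi> a + B a * (q - a)"
   and tang: "\<And>a q. \<psi> q * \<phi> a \<ge> \<psi> a * (\<phi> a + B a * (q - a))"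
   and st: "s \<le> t"
  shows "\<psi> s / \<phi> s \<le> \<psi> t / \<phi> t"
proof -
  define r where "r q = \<psi> q / \<phi> q" for q
  obtain p where p: "p \<in> {s..t}" "\<And>q. q \<in> {s..t} \<Longrightarrow> \<phi> p \<le> \<phi> q"
    using continuous_attains_inf[OF compact_Icc _ cont] st by auto
  define m where "m = \<phi> p"
  have m: "m > 0" using pos m_def by auto
  have rnn: "r q \<ge> 0" for q using nn pos r_def by (simp add: less_imp_le)
  define D where "D a b = \<phi> b - \<phi> a - B a * (b - a)" for a b
  have Dnn: "D a b \<ge> 0" for a b using sup[of a b] unfolding D_def by linarith
  have step: "r b \<ge> r a * (1 - D a b / \<phi> b)" for a b
  proof -
    have "\<psi> b * \<phi> a \<ge> \<psi> a * (\<phi> b - D a b)" using tang[of a b] unfolding D_def by simp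
    hence "\<psi> b * \<phi> a / (\<phi> a * \<phi> b) \<ge> \<psi> a * (\<phi> b - D a b) / (\<phi> a * \<phi> b)"
      using pos[of a] pos[of b] by (intro divide_right_mono) auto
    moreover have "\<psi> b * \<phi> a / (\<phi> a * \<phi> b) = r b" using pos[of a] unfolding r_def by simp
    moreover have "\<psi> a * (\<phi> b - D a b) / (\<phi> a * \<phi> b) = r a * (1 - D a b / \<phi> b)"
      using pos[of a] pos[of b] unfolding r_def by (simp add: field_simps)
    ultimately show ?thesis by simp
  qed
  have main: "r t \<ge> r s - r s * ((t - s) * (B t - B s) / m) / real n" if n: "n > 0" for n :: nat
  proof -
    define h where "h = (t - s) / real n"
    define \<tau> where "\<tau> i = s + real i * h" for i :: nat
    define a where "a i = D (\<tau> i) (\<tau> (Suc i)) / \<phi> (\<tau> (Suc i))" for i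
    have ann: "a i \<ge> 0" for i unfolding a_def using Dnn pos by (simp add: less_imp_le)
    have ind: "r (\<tau> k) \<ge> r s - r s * (\<Sum>i<k. a i)" for k
    proof (induction k)
      case 0 thus ?case by (simp add: \<tau>_def)
    next
      case (Suc k)
      define A where "A = (\<Sum>i<k. a i)"
      have A: "A \<ge> 0" unfolding A_def using ann by (simp add: sum_nonneg)
      have s1: "r (\<tau> (Suc k)) \<ge> r (\<tau> k) * (1 - a k)" using step unfolding a_def by simp
      show ?case
      proof (cases "1 - a k \<ge> 0")
        case True
        have "r (\<tau> k) * (1 - a k) \<ge> (r s - r s * A) * (1 - a k)"
          using Suc.IH True unfolding A_def by (intro mult_right_mono) auto
        moreover have "(r s - r s * A) * (1 - a k) \<ge> r s - r s * (A + a k)"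
          using A ann[of k] rnn[of s] by (simp add: algebra_simps)
        ultimately show ?thesis using s1 unfolding A_def by simp
      next
        case False
        have "1 - (A + a k) \<le> 0" using A False by simp
        hence "r s * (1 - (A + a k)) \<le> 0" using rnn[of s] by (rule mult_nonneg_nonpos[rotated])
        hence "r s - r s * (A + a k) \<le> 0" by (simp add: algebra_simps)
        thus ?thesis using rnn[of "\<tau> (Suc k)"] unfolding A_def by simp
      qed
    qed
    have tn: "\<tau> n = t" unfolding \<tau>_def h_def using n by simp
    have hnn: "h \<ge> 0" unfolding h_def using st by simp
    have inI: "\<tau> i \<in> {s..t}" if "i \<le> n" for i
    proof -
      have "real i * h \<le> real n * h" using that hnn by (intro mult_right_mono) auto
      also have "\<dots> = t - s" unfolding h_def using n by simp
      finally show ?thesis unfolding \<tau>_def using hnn by simp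
    qed
    have Dle: "D (\<tau> i) (\<tau> (Suc i)) \<le> h * (B (\<tau> (Suc i)) - B (\<tau> i))" for i
    proof -
      have "\<tau> (Suc i) - \<tau> i = h" unfolding \<tau>_def by (simp add: algebra_simps)
      moreover have "\<phi> (\<tau> i) \<ge> \<phi> (\<tau> (Suc i)) + B (\<tau> (Suc i)) * (\<tau> i - \<tau> (Suc i))" by (rule sup)
      ultimately show ?thesis unfolding D_def by (simp add: algebra_simps)
    qed
    have "(\<Sum>i<n. a i) \<le> (\<Sum>i<n. h * (B (\<tau> (Suc i)) - B (\<tau> i)) / m)"
    proof (rule sum_mono)
      fix i assume "i \<in> {..<n}"
      hence "\<phi> (\<tau> (Suc i)) \<ge> m" unfolding m_def using p(2) inI[of "Suc i"] by auto
      hence "a i \<le> D (\<tau> i) (\<tau> (Suc i)) / m" unfolding a_def using m Dnn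
        by (intro divide_left_mono) auto
      also have "\<dots> \<le> h * (B (\<tau> (Suc i)) - B (\<tau> i)) / m" using Dle m by (intro divide_right_mono) auto
      finally show "a i \<le> h * (B (\<tau> (Suc i)) - B (\<tau> i)) / m" .
    qed
    also have "\<dots> = h * (\<Sum>i<n. (B (\<tau> (Suc i)) - B (\<tau> i))) / m"
      by (simp add: sum_divide_distrib[symmetric] sum_distrib_left)
    also have "(\<Sum>i<n. (B (\<tau> (Suc i)) - B (\<tau> i))) = B t - B s"
      using sum_lessThan_telescope[of "\<lambda>i. B (\<tau> i)" n] tn by (simp add: \<tau>_def)
    finally have sa: "(\<Sum>i<n. a i) \<le> h * (B t - B s) / m" .
    have "r s * (\<Sum>i<n. a i) \<le> r s * (h * (B t - B s) / m)" using sa rnn by (intro mult_left_mono) auto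
    also have "\<dots> = r s * ((t - s) * (B t - B s) / m) / real n" unfolding h_def by simp
    finally show ?thesis using ind[of n] tn by simp
  qed
  define C where "C = r s * ((t - s) * (B t - B s) / m)"
  have "r t \<ge> r s"
  proof (rule ccontr)
    assume "\<not> r s \<le> r t"
    hence d: "r s - r t > 0" by simp
    obtain n0 :: nat where n0: "C / (r s - r t) < real n0" using reals_Archimedean2 by blast
    define n where "n = Suc n0"
    have n: "real n > C / (r s - r t)" "n > 0" using n0 unfolding n_def by auto
    have "C / (r s - r t) * (r s - r t) < real n * (r s - r t)" using n d by (intro mult_strict_right_mono) auto
    hence "C < real n * (r s - r t)" using d by simp
    hence "C / real n < r s - r t" using n(2) by (simp add: divide_simps mult.commute)
    with main[OF n(2)] show False unfolding C_def by simp
  qed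
  thus ?thesis unfolding r_def .
qed

lemma line_mono:
  fixes T :: "'a::real_normed_vector \<Rightarrow> 'a"
  assumes lin: "linear T"
    and pres: "\<And>x y. bj_orth x y \<Longrightarrow> bj_orth (T x) (T y)"
    and nz: "\<And>q. y + q *\<^sub>R x \<noteq> 0"
    and st: "s \<le> t"
  shows "norm (T (y + s *\<^sub>R x)) / norm (y + s *\<^sub>R x) \<le> norm (T (y + t *\<^sub>R x)) / norm (y + t *\<^sub>R x)"
proof -
  define \<phi> where "\<phi> q = norm (y + q *\<^sub>R x)" for q
  define \<psi> where "\<psi> q = norm (T (y + q *\<^sub>R x))" for q
  have ex: "\<exists>b. \<forall>q. \<phi> q \<ge> \<phi> a + b * (q - a)" for a
  proof (rule subgrad_exists)
    fix h k :: real assume hk: "h > 0" "k > 0"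
    have "(h + k) *\<^sub>R (y + a *\<^sub>R x) = h *\<^sub>R (y + (a - k) *\<^sub>R x) + k *\<^sub>R (y + (a + h) *\<^sub>R x)"
      by (simp add: algebra_simps)
    hence "norm ((h + k) *\<^sub>R (y + a *\<^sub>R x)) = norm (h *\<^sub>R (y + (a - k) *\<^sub>R x) + k *\<^sub>R (y + (a + h) *\<^sub>R x))"
      by (simp only:)
    also have "\<dots> \<le> norm (h *\<^sub>R (y + (a - k) *\<^sub>R x)) + norm (k *\<^sub>R (y + (a + h) *\<^sub>R x))"
      by (rule norm_triangle_ineq)
    finally have "norm ((h + k) *\<^sub>R (y + a *\<^sub>R x)) \<le> norm (h *\<^sub>R (y + (a - k) *\<^sub>R x)) + norm (k *\<^sub>R (y + (a + h) *\<^sub>R x))" .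
    thus "(h + k) * \<phi> a \<le> h * \<phi> (a - k) + k * \<phi> (a + h)" unfolding \<phi>_def using hk by simp
  qed
  define B where "B a = (SOME b. \<forall>q. \<phi> q \<ge> \<phi> a + b * (q - a))" for a
  have sup: "\<phi> q \<ge> \<phi> a + B a * (q - a)" for a q
    using someI_ex[OF ex[of a]] unfolding B_def by blast
  have tang: "\<psi> q * \<phi> a \<ge> \<psi> a * (\<phi> a + B a * (q - a))" for a q
    unfolding \<psi>_def \<phi>_def
  proof (rule tangent[OF lin pres nz])
    fix q' show "norm (y + q' *\<^sub>R x) \<ge> norm (y + a *\<^sub>R x) + B a * (q' - a)"
      using sup[of a q'] unfolding \<phi>_def .
  qed
  have "\<psi> s / \<phi> s \<le> \<psi> t / \<phi> t"
  proof (rule ratio_mono[where B = B, OF _ _ _ sup tang st])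
    show "\<And>q. \<phi> q > 0" unfolding \<phi>_def using nz by simp
    show "continuous_on {s..t} \<phi>" unfolding \<phi>_def by (intro continuous_intros)
    show "\<And>q. \<psi> q \<ge> 0" unfolding \<psi>_def by simp
  qed
  thus ?thesis unfolding \<phi>_def \<psi>_def .
qed

lemma line_const:
  fixes T :: "'a::real_normed_vector \<Rightarrow> 'a"
  assumes lin: "linear T"
    and pres: "\<And>x y. bj_orth x y \<Longrightarrow> bj_orth (T x) (T y)"
    and nz: "\<And>q. y + q *\<^sub>R x \<noteq> 0"
  shows "norm (T (y + q *\<^sub>R x)) / norm (y + q *\<^sub>R x) = norm (T y) / norm y"
proof -
  have nz': "\<And>q. y + q *\<^sub>R (- x) \<noteq> 0" using nz by (metis scaleR_minus_left scaleR_minus_right)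
  note m1 = line_mono[OF lin pres nz]
  note m2 = line_mono[OF lin pres nz']
  have e: "y + p *\<^sub>R (- x) = y + (- p) *\<^sub>R x" for p by simp
  show ?thesis
  proof (cases "q \<ge> 0")
    case True
    from m1[of 0 q] m2[of "-q" 0] True show ?thesis by (simp add: e)
  next
    case False
    from m1[of q 0] m2[of 0 "-q"] False show ?thesis by (simp add: e)
  qed
qed

lemma pair_eq:
  fixes T :: "'a::real_normed_vector \<Rightarrow> 'a"
  assumes lin: "linear T"
    and pres: "\<And>x y. bj_orth x y \<Longrightarrow> bj_orth (T x) (T y)"
    and ind: "\<And>a b. a *\<^sub>R x + b *\<^sub>R y = 0 \<Longrightarrow> a = 0 \<and> b = 0"
  shows "norm (T x) / norm x = norm (T y) / norm y"
proof -
  have n1: "y + q *\<^sub>R x \<noteq> 0" for q using ind[of q 1] by (auto simp: add.commute)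
  have n2: "x + q *\<^sub>R y \<noteq> 0" for q using ind[of 1 q] by auto
  have "norm (T (y + 1 *\<^sub>R x)) / norm (y + 1 *\<^sub>R x) = norm (T y) / norm y"
    by (rule line_const[OF lin pres n1])
  moreover have "norm (T (x + 1 *\<^sub>R y)) / norm (x + 1 *\<^sub>R y) = norm (T x) / norm x"
    by (rule line_const[OF lin pres n2])
  ultimately show ?thesis by (simp add: add.commute)
qed

theorem mainTheorem1:
  fixes T :: "'a::banach \<Rightarrow> 'a"
  assumes "linear T"
    and "\<And>x y. bj_orth x y \<Longrightarrow> bj_orth (T x) (T y)"
  shows "\<exists>(k::real) (U::'a \<Rightarrow> 'a). linear U \<and> (\<forall>x. norm (U x) = norm x) \<and>
           (\<forall>x. T x = k *\<^sub>R U x)"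
proof -
  note lin = assms(1) and pres = assms(2)
  have "\<exists>c. c \<ge> 0 \<and> (\<forall>z. norm (T z) = c * norm z)"
  proof (cases "\<exists>x0::'a. x0 \<noteq> 0")
    case False
    hence "\<forall>z::'a. z = 0" by blast
    thus ?thesis using linear_0[OF lin] by (intro exI[of _ 0]) auto
  next
    case True
    then obtain x0 :: 'a where x0: "x0 \<noteq> 0" by blast
    define c where "c = norm (T x0) / norm x0"
    have "norm (T z) = c * norm z" for z
    proof (cases "\<exists>a. z = a *\<^sub>R x0")
      case True
      then obtain a where a: "z = a *\<^sub>R x0" by blast
      have "T z = a *\<^sub>R T x0" unfolding a by (rule linear_scale[OF lin])
      hence "norm (T z) = \<bar>a\<bar> * norm (T x0)" by simp
      moreover have "norm z = \<bar>a\<bar> * norm x0" unfolding a by simp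
      moreover have "norm (T x0) = c * norm x0" unfolding c_def using x0 by simp
      ultimately show ?thesis by simp
    next
      case False
      have ind: "a *\<^sub>R x0 + b *\<^sub>R z = 0 \<Longrightarrow> a = 0 \<and> b = 0" for a b
      proof -
        assume h: "a *\<^sub>R x0 + b *\<^sub>R z = 0"
        have "b = 0"
        proof (rule ccontr)
          assume "b \<noteq> 0"
          have hb: "b *\<^sub>R z = (- a) *\<^sub>R x0" using h by (simp add: eq_neg_iff_add_eq_0 add.commute)
          have "z = (1 / b) *\<^sub>R (b *\<^sub>R z)" using \<open>b \<noteq> 0\<close> by simp
          hence "z = (- a / b) *\<^sub>R x0" using hb by simp
          thus False using False by blast
        qed
        thus ?thesis using h x0 by simp
      qed
      have zn: "z \<noteq> 0" using False by (metis scaleR_zero_left)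
      have "norm (T x0) / norm x0 = norm (T z) / norm z" by (rule pair_eq[OF lin pres ind])
      hence "c = norm (T z) / norm z" unfolding c_def .
      thus ?thesis using zn by simp
    qed
    moreover have "c \<ge> 0" unfolding c_def by simp
    ultimately show ?thesis by blast
  qed
  then obtain c where c: "c \<ge> 0" "\<And>z. norm (T z) = c * norm z" by blast
  show ?thesis
  proof (cases "c = 0")
    case True
    hence "T x = 0" for x using c(2)[of x] by simp
    moreover have "linear (\<lambda>x::'a. x)" by (rule linearI) auto
    ultimately show ?thesis by (intro exI[of _ 0] exI[of _ "\<lambda>x. x"]) auto
  next
    case False
    hence cp: "c > 0" using c(1) by simp
    show ?thesis
    proof (intro exI[of _ c] exI[of _ "\<lambda>x. (1 / c) *\<^sub>R T x"] conjI allI)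
      show "linear (\<lambda>x. (1 / c) *\<^sub>R T x)"
      proof (rule linearI)
        fix b1 b2 show "(1 / c) *\<^sub>R T (b1 + b2) = (1 / c) *\<^sub>R T b1 + (1 / c) *\<^sub>R T b2"
          by (simp only: linear_add[OF lin] scaleR_add_right)
      next
        fix r b show "(1 / c) *\<^sub>R T (r *\<^sub>R b) = r *\<^sub>R ((1 / c) *\<^sub>R T b)"
          by (simp only: linear_scale[OF lin] scaleR_scaleR mult.commute)
      qed
      fix x
      show "norm ((1 / c) *\<^sub>R T x) = norm x" using c(2)[of x] cp by simp
      show "T x = c *\<^sub>R ((1 / c) *\<^sub>R T x)" using cp by simp
    qed
  qed
qed

end
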